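(* Let $p$ be an odd prime such that $p\equiv t\pmod{3}$ with $t\in\{1,2\}$. Then \[ \sum_{k=0}^{(tp-1)/3}\frac{(1/3)_k^3}{k!^3} \equiv \frac{(2/3)_{(tp-1)/3}^2}{(1)_{(tp-1)/3}^2}\bigg\{1+(-1)^{t-1}(tp)^2\sum_{i=1}^{(tp-1)/3}\frac{1}{(3i-1)^2}\bigg\}\pmod{p^3}. \]
   Context: For complex $x$, $(x)_0=1$ and $(x)_m=x(x+1)\cdots(x+m-1)$ for positive integers $m$. Congruences between rational numbers modulo $p^3$ are taken in the ring $\mathbb{Z}_p$ of $p$-adic integers (all quantities involved are $p$-adic integers). *)

theory Defs
  imports Complex_Main "HOL-Computational_Algebra.Primes"
begin

definition rat_cong_padic :: "rat \<Rightarrow> rat \<Rightarrow> nat \<Rightarrow> nat \<Rightarrow> bool" where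
  "rat_cong_padic x y p e \<longleftrightarrow>
     (\<exists>a b :: int. b \<noteq> 0 \<and> x - y = of_int a / of_int b \<and>
        \<not> (int p dvd b) \<and> (int p ^ e) dvd a)"

end

theory Submission
  imports Defs
begin



definition pint :: "nat \<Rightarrow> rat \<Rightarrow> bool" where
  "pint p q \<longleftrightarrow> (\<exists>a b :: int. b \<noteq> 0 \<and> \<not> int p dvd b \<and> q = of_int a / of_int b)"

lemma pint_frac: "b \<noteq> 0 \<Longrightarrow> \<not> int p dvd b \<Longrightarrow> pint p (of_int a / of_int b)"
  unfolding pint_def by blast


context fixes p :: nat assumes pp: "prime p"
begin

lemma pint_int: "pint p (of_int a)"
proof -
  have "p \<noteq> 1" using pp by auto
  then show ?thesis using pint_frac[of 1 p a] by simp
qed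

lemma pint_nat: "pint p (of_nat a)"
  using pint_int[of "int a"] by simp

lemma pint_0: "pint p 0" using pint_int[of 0] by simp
lemma pint_1: "pint p 1" using pint_int[of 1] by simp
lemma pint_numeral: "pint p (numeral w)" using pint_int[of "numeral w"] by simp

lemma ndvd_mult: "\<not> int p dvd b \<Longrightarrow> \<not> int p dvd d \<Longrightarrow> \<not> int p dvd (b * d)"
  using pp by (simp add: prime_dvd_mult_iff)

lemma pint_add: "pint p x \<Longrightarrow> pint p y \<Longrightarrow> pint p (x + y)"
proof -
  assume "pint p x" "pint p y"
  then obtain a b c d :: int where h: "b \<noteq> 0" "\<not> int p dvd b" "x = of_int a / of_int b"
     "d \<noteq> 0" "\<not> int p dvd d" "y = of_int c / of_int d" unfolding pint_def by blast
  have "x + y = of_int (a * d + c * b) / of_int (b * d)" using h by (simp add: field_simps)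
  moreover have "b * d \<noteq> 0" using h by simp
  ultimately show ?thesis using pint_frac ndvd_mult h by metis
qed

lemma pint_mult: "pint p x \<Longrightarrow> pint p y \<Longrightarrow> pint p (x * y)"
proof -
  assume "pint p x" "pint p y"
  then obtain a b c d :: int where h: "b \<noteq> 0" "\<not> int p dvd b" "x = of_int a / of_int b"
     "d \<noteq> 0" "\<not> int p dvd d" "y = of_int c / of_int d" unfolding pint_def by blast
  have "x * y = of_int (a * c) / of_int (b * d)" using h by (simp add: field_simps)
  moreover have "b * d \<noteq> 0" using h by simp
  ultimately show ?thesis using pint_frac ndvd_mult h by metis
qed

lemma pint_uminus: "pint p x \<Longrightarrow> pint p (- x)"
  using pint_mult[OF pint_int[of "-1"]] by simp

lemma pint_diff: "pint p x \<Longrightarrow> pint p y \<Longrightarrow> pint p (x - y)"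
  using pint_add pint_uminus by (metis diff_conv_add_uminus)

lemma pint_power: "pint p x \<Longrightarrow> pint p (x ^ k)"
  by (induction k) (auto intro: pint_mult pint_1)

lemma pint_sum: "(\<And>i. i \<in> A \<Longrightarrow> pint p (f i)) \<Longrightarrow> pint p (sum f A)"
  by (induction A rule: infinite_finite_induct) (auto intro: pint_add pint_0)

lemma pint_prod: "(\<And>i. i \<in> A \<Longrightarrow> pint p (f i)) \<Longrightarrow> pint p (prod f A)"
  by (induction A rule: infinite_finite_induct) (auto intro: pint_mult pint_1)

lemma pint_inv_int: "\<not> int p dvd b \<Longrightarrow> pint p (1 / of_int b)"
proof -
  assume h: "\<not> int p dvd b"
  then have "b \<noteq> 0" by auto
  then show ?thesis using pint_frac[of b p 1] h by simp
qed

lemma pint_inv_nat: "\<not> p dvd b \<Longrightarrow> pint p (1 / of_nat b)"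
  using pint_inv_int[of "int b"] by simp

lemma pint_inv_fact: "k < p \<Longrightarrow> pint p (1 / fact k)"
proof -
  assume "k < p"
  then have "\<not> p dvd fact k" using prime_dvd_fact_iff[OF pp] by simp
  then show ?thesis using pint_inv_nat[of "fact k"] by (simp add: of_nat_fact)
qed

definition pc :: "nat \<Rightarrow> rat \<Rightarrow> rat \<Rightarrow> bool" where
  "pc e x y \<longleftrightarrow> pint p ((x - y) / of_nat p ^ e)"

lemma pc_rat_cong: "pc e x y \<Longrightarrow> rat_cong_padic x y p e"
proof -
  assume "pc e x y"
  then obtain a b :: int where h: "b \<noteq> 0" "\<not> int p dvd b" "(x - y) / of_nat p ^ e = of_int a / of_int b"
    unfolding pc_def pint_def by blast
  have p0: "(of_nat p :: rat) ^ e \<noteq> 0" using pp by (simp add: prime_gt_0_nat)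
  have "x - y = of_int a / of_int b * of_nat p ^ e" using h(3) p0 by (simp add: divide_eq_eq)
  also have "\<dots> = of_int (a * int p ^ e) / of_int b" by simp
  finally have eq: "x - y = of_int (a * int p ^ e) / of_int b" .
  show ?thesis unfolding rat_cong_padic_def
    apply (rule exI[of _ "a * int p ^ e"], rule exI[of _ b]) using h eq by simp
qed

lemma pc_refl: "pc e x x" unfolding pc_def using pint_0 by simp

lemma pc_sym: "pc e x y \<Longrightarrow> pc e y x"
proof -
  assume "pc e x y"
  then have "pint p (- ((x - y) / of_nat p ^ e))" unfolding pc_def by (rule pint_uminus)
  moreover have "- ((x - y) / of_nat p ^ e) = (y - x) / of_nat p ^ e" by (metis minus_diff_eq minus_divide_left)
  ultimately show ?thesis unfolding pc_def by simp
qed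

lemma pc_trans: "pc e x y \<Longrightarrow> pc e y z \<Longrightarrow> pc e x z"
proof -
  assume "pc e x y" "pc e y z"
  then have "pint p ((x - y) / of_nat p ^ e + (y - z) / of_nat p ^ e)" unfolding pc_def by (rule pint_add)
  moreover have "(x - y) / of_nat p ^ e + (y - z) / of_nat p ^ e = (x - z) / of_nat p ^ e"
    by (simp add: add_divide_distrib[symmetric])
  ultimately show ?thesis unfolding pc_def by simp
qed

lemma pc_add: "pc e x y \<Longrightarrow> pc e u v \<Longrightarrow> pc e (x + u) (y + v)"
proof -
  assume "pc e x y" "pc e u v"
  then have "pint p ((x - y) / of_nat p ^ e + (u - v) / of_nat p ^ e)" unfolding pc_def by (rule pint_add)
  moreover have "(x - y) / of_nat p ^ e + (u - v) / of_nat p ^ e = ((x + u) - (y + v)) / of_nat p ^ e"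
    by (simp add: add_divide_distrib[symmetric])
  ultimately show ?thesis unfolding pc_def by simp
qed

lemma pc_mult: "pint p c \<Longrightarrow> pc e x y \<Longrightarrow> pc e (c * x) (c * y)"
proof -
  assume "pint p c" "pc e x y"
  then have "pint p (c * ((x - y) / of_nat p ^ e))" unfolding pc_def by (rule pint_mult)
  moreover have "c * ((x - y) / of_nat p ^ e) = (c * x - c * y) / of_nat p ^ e"
    by (simp add: right_diff_distrib)
  ultimately show ?thesis unfolding pc_def by (simp only:)
qed

lemma pc_sum: "(\<And>i. i \<in> A \<Longrightarrow> pc e (f i) (g i)) \<Longrightarrow> pc e (sum f A) (sum g A)"
  by (induction A rule: infinite_finite_induct) (auto intro: pc_add pc_refl)

lemma pc_eqI: "pint p z \<Longrightarrow> x - y = of_nat p ^ e * z \<Longrightarrow> pc e x y"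
  unfolding pc_def using pp by (simp add: prime_gt_0_nat)

end



definition P2 :: "rat \<Rightarrow> rat \<Rightarrow> nat \<Rightarrow> rat" where
  "P2 s q k = (\<Prod>j<k. of_nat j ^ 2 + s * of_nat j + q)"

definition tt :: "rat \<Rightarrow> rat \<Rightarrow> nat \<Rightarrow> nat \<Rightarrow> rat" where
  "tt s q n k = pochhammer (- of_nat n) k * P2 s q k / (fact k ^ 2 * pochhammer (s - of_nat n) k)"

definition rr :: "rat \<Rightarrow> rat \<Rightarrow> nat \<Rightarrow> rat" where
  "rr s q n = (\<Prod>j<n. (1 + of_nat j) ^ 2 - s * (1 + of_nat j) + q) / (fact n * pochhammer (1 - s) n)"

lemma tt_Suc_k:
  "tt s q m (Suc k) = tt s q m k * ((of_nat k - of_nat m) * (of_nat k ^ 2 + s * of_nat k + q)) /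
      ((of_nat k + 1) ^ 2 * (s - of_nat m + of_nat k))"
proof -
  define A where "A = pochhammer (- of_nat m) k * P2 s q k"
  define B where "B = fact k ^ 2 * pochhammer (s - of_nat m) k"
  have e1: "pochhammer (- of_nat m :: rat) (Suc k) = pochhammer (- of_nat m) k * (of_nat k - of_nat m)"
    by (simp add: pochhammer_Suc)
  have e2: "P2 s q (Suc k) = P2 s q k * (of_nat k ^ 2 + s * of_nat k + q)" by (simp add: P2_def)
  have f: "(fact (Suc k) :: rat) = fact k * (of_nat k + 1)" by (simp add: fact_Suc)
  have e3: "(fact (Suc k) :: rat) ^ 2 * pochhammer (s - of_nat m) (Suc k) = B * ((of_nat k + 1) ^ 2 * (s - of_nat m + of_nat k))"
    unfolding f pochhammer_Suc B_def by (simp add: power_mult_distrib mult_ac)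
  have "tt s q m (Suc k) = (A * ((of_nat k - of_nat m) * (of_nat k ^ 2 + s * of_nat k + q))) /
      (B * ((of_nat k + 1) ^ 2 * (s - of_nat m + of_nat k)))"
    unfolding tt_def e3[symmetric] e1 e2 A_def by (simp add: mult_ac)
  also have "\<dots> = A / B * (((of_nat k - of_nat m) * (of_nat k ^ 2 + s * of_nat k + q)) /
      ((of_nat k + 1) ^ 2 * (s - of_nat m + of_nat k)))"
    by (rule times_divide_times_eq[symmetric])
  also have "A / B = tt s q m k" unfolding tt_def A_def B_def by simp
  finally show ?thesis by simp
qed

lemma poch_neg_rel:
  "pochhammer (- of_nat m :: rat) k * (of_nat m + 1) = pochhammer (- of_nat m - 1) k * (of_nat m + 1 - of_nat k)"
proof (induction k)
  case 0 then show ?case by simp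
next
  case (Suc k)
  have "pochhammer (- of_nat m :: rat) (Suc k) * (of_nat m + 1) =
      (pochhammer (- of_nat m) k * (of_nat m + 1)) * (- of_nat m + of_nat k)"
    by (simp add: pochhammer_Suc algebra_simps)
  also have "\<dots> = pochhammer (- of_nat m - 1) k * ((of_nat m + 1 - of_nat k) * (- of_nat m + of_nat k))"
    using Suc by simp
  also have "(of_nat m + 1 - of_nat k) * (- of_nat m + of_nat k) = ((- of_nat m - 1 + of_nat k) * (of_nat m + 1 - of_nat (Suc k)) :: rat)"
    by (simp add: algebra_simps)
  finally show ?case by (simp add: pochhammer_Suc algebra_simps)
qed

lemma poch_shift_rel:
  "pochhammer (a :: rat) k * (a + of_nat k) = a * pochhammer (a + 1) k"
  using pochhammer_Suc[of a k] pochhammer_rec[of a k] by simp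

lemma poch_nz:
  assumes hs: "\<forall>i\<le>N. s \<noteq> of_nat i" and "m \<le> N" "k \<le> m + 1"
  shows "pochhammer (s - of_nat m :: rat) k \<noteq> 0"
proof
  assume "pochhammer (s - of_nat m) k = 0"
  then obtain j where j: "j < k" "s - of_nat m = - of_nat j" using pochhammer_eq_0_iff by blast
  then have "j \<le> m" using assms by simp
  then have "s = of_nat (m - j)" using j by (simp add: of_nat_diff)
  moreover have "m - j \<le> N" using assms by simp
  ultimately show False using hs by blast
qed

lemma key_id0: fixes M K Q D :: rat assumes a: "M + 1 \<noteq> 0" "K - D \<noteq> 0" "K + 1 \<noteq> 0" "D \<noteq> 0"
shows "1 - ((1+M)^2 - (1+M-D)*(1+M) + Q)/((1+M)*D) * (((M+1-K)*(-D))/((M+1)*(K-D))) = -((K+1)^2/(M+1)^2) * (((K-M-1)*(K^2+(1+M-D)*K+Q))/((K+1)^2*(K-D))) + K^2/(M+1)^2"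
proof -
  have g1: "\<And>A B C E :: rat. B \<noteq> 0 \<Longrightarrow> E \<noteq> 0 \<Longrightarrow> 1 - A/B*(C/E) = (B*E - A*C)/(B*E)"
    by (simp add: field_simps)
  have g2: "\<And>P R S T U :: rat. R \<noteq> 0 \<Longrightarrow> T \<noteq> 0 \<Longrightarrow> -(P/R)*(S/T) + U/R = (-P*S + U*T)/(R*T)"
    by (simp add: field_simps)
  have b: "1 + M \<noteq> 0" using a by (simp add: add.commute)
  have n1: "(1+M)*D \<noteq> 0" "(M+1)*(K-D) \<noteq> 0" "(M+1)^2 \<noteq> 0" "(K+1)^2*(K-D) \<noteq> 0" using a b by auto
  show ?thesis
    unfolding g1[OF n1(1,2)] g2[OF n1(3,4)]
    using n1 by (simp add: frac_eq_eq) (simp add: algebra_simps power2_eq_square)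
qed

lemma wz_step:
  fixes s q :: rat and m k N :: nat
  assumes hs: "\<forall>i\<le>N. s \<noteq> of_nat i" and m: "m + 1 \<le> N" and k: "k \<le> m + 1"
  defines "\<rho> \<equiv> ((1 + of_nat m) ^ 2 - s * (1 + of_nat m) + q) / ((1 + of_nat m) * (1 - s + of_nat m))"
  defines "G \<equiv> (\<lambda>j. - ((of_nat j :: rat) ^ 2 / (of_nat m + 1) ^ 2) * tt s q (Suc m) j)"
  shows "tt s q (Suc m) k - \<rho> * tt s q m k = G (Suc k) - G k"
proof -
  define \<tau> where "\<tau> = tt s q (Suc m) k"
  define D where "D = 1 - s + of_nat m"
  define M where "M = (of_nat m :: rat)"
  define K where "K = (of_nat k :: rat)"
  have sD: "s = 1 + M - D" unfolding D_def M_def by simp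
  have nz1: "K - D \<noteq> 0"
  proof
    assume "K - D = 0"
    then have "s = of_nat (m + 1 - k)" using k unfolding K_def D_def by (simp add: of_nat_diff algebra_simps)
    then show False using hs m by auto
  qed
  have nz2: "D \<noteq> 0"
  proof
    assume "D = 0"
    then have "s = of_nat (m + 1)" unfolding D_def by (simp add: algebra_simps)
    then show False using hs m by blast
  qed
  have nz3: "pochhammer (- D) k \<noteq> 0"
    using poch_nz[OF hs m, of k] k unfolding D_def by (simp add: algebra_simps)
  have nzM: "M + 1 \<noteq> 0" "K + 1 \<noteq> 0" unfolding M_def K_def by (simp_all add: add.commute)
  have A: "tt s q (Suc m) (Suc k) = \<tau> * ((K - M - 1) * (K ^ 2 + (1 + M - D) * K + q)) /
      ((K + 1) ^ 2 * (K - D))"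
    unfolding \<tau>_def tt_Suc_k sD[symmetric] by (simp add: K_def M_def D_def algebra_simps)
  define a0 where "a0 = - of_nat m - (1::rat)"
  have tau: "\<tau> = pochhammer a0 k * P2 s q k / (fact k ^ 2 * pochhammer (- D) k)"
  proof -
    have h1: "- of_nat (Suc m) = a0" "s - of_nat (Suc m) = - D" by (simp_all add: a0_def D_def algebra_simps)
    show ?thesis unfolding \<tau>_def tt_def h1 ..
  qed
  have r1: "pochhammer (- of_nat m :: rat) k = pochhammer a0 k * (M + 1 - K) / (M + 1)"
    using poch_neg_rel[of m k] nzM unfolding a0_def M_def K_def by (simp add: field_simps)
  have r2: "pochhammer (s - of_nat m) k = pochhammer (- D) k * (K - D) / (- D)"
  proof -
    have e: "s - of_nat m = - D + 1" unfolding D_def by simp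
    have "pochhammer (- D + 1) k = ((- D) * pochhammer (- D + 1) k) / (- D)" using nz2 by simp
    also have "\<dots> = pochhammer (- D) k * (- D + of_nat k) / (- D)" using poch_shift_rel[of "- D" k] by simp
    also have "- D + of_nat k = K - D" unfolding K_def by simp
    finally show ?thesis unfolding e .
  qed
  have aux: "\<And>PA PB X M P F D K :: rat. PB \<noteq> 0 \<Longrightarrow> D \<noteq> 0 \<Longrightarrow> K - D \<noteq> 0 \<Longrightarrow> M \<noteq> 0 \<Longrightarrow> F \<noteq> 0 \<Longrightarrow>
     (PA * X / M) * P / (F * (PB * (K - D) / (- D))) = (PA * P / (F * PB)) * (X * (- D)) / (M * (K - D))"
    by (simp add: field_simps)
  have Bt: "tt s q m k = \<tau> * ((M + 1 - K) * (- D)) / ((M + 1) * (K - D))"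
    unfolding tt_def r1 r2 tau
    by (rule aux) (use nz1 nz2 nz3 nzM in auto)
  have key: "1 - \<rho> * (((M + 1 - K) * (- D)) / ((M + 1) * (K - D)))
     = - ((K + 1) ^ 2 / (M + 1) ^ 2) * (((K - M - 1) * (K ^ 2 + (1 + M - D) * K + q)) /
      ((K + 1) ^ 2 * (K - D))) + K ^ 2 / (M + 1) ^ 2"
  proof -
    have "\<rho> = ((1+M)^2 - (1+M-D)*(1+M) + q)/((1+M)*D)" unfolding \<rho>_def D_def M_def by simp
    then show ?thesis using key_id0[OF nzM(1) nz1 nzM(2) nz2] by simp
  qed
  have "tt s q (Suc m) k - \<rho> * tt s q m k = \<tau> * (1 - \<rho> * (((M + 1 - K) * (- D)) / ((M + 1) * (K - D))))"
    unfolding Bt \<tau>_def by (simp add: algebra_simps)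
  also have "\<dots> = G (Suc k) - G k"
    unfolding key G_def A by (simp add: \<tau>_def[symmetric] K_def M_def algebra_simps)
  finally show ?thesis .
qed


lemma rr_Suc: "rr s q (Suc m) = rr s q m * (((1 + of_nat m) ^ 2 - s * (1 + of_nat m) + q) / ((1 + of_nat m) * (1 - s + of_nat m)))"
proof -
  define X where "X = (\<Prod>j<m. (1 + of_nat j) ^ 2 - s * (1 + of_nat j) + (q::rat))"
  define Y where "Y = (fact m :: rat) * pochhammer (1 - s) m"
  have "rr s q (Suc m) = (X * ((1 + of_nat m) ^ 2 - s * (1 + of_nat m) + q)) / (Y * ((1 + of_nat m) * (1 - s + of_nat m)))"
    unfolding rr_def X_def Y_def by (simp add: fact_Suc pochhammer_Suc algebra_simps)
  also have "\<dots> = X / Y * (((1 + of_nat m) ^ 2 - s * (1 + of_nat m) + q) / ((1 + of_nat m) * (1 - s + of_nat m)))"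
    by (rule times_divide_times_eq[symmetric])
  finally show ?thesis unfolding rr_def X_def Y_def .
qed

lemma tt_zero: "k > n \<Longrightarrow> tt s q n k = 0"
  unfolding tt_def by (simp add: pochhammer_of_nat_eq_0_lemma)

lemma saal:
  fixes s q :: rat
  assumes hs: "\<forall>i\<le>N. s \<noteq> of_nat i"
  shows "n \<le> N \<Longrightarrow> (\<Sum>k=0..n. tt s q n k) = rr s q n"
proof (induction n)
  case 0
  then show ?case by (simp add: tt_def rr_def P2_def)
next
  case (Suc m)
  define \<rho> where "\<rho> = ((1 + of_nat m) ^ 2 - s * (1 + of_nat m) + q) / ((1 + of_nat m) * (1 - s + of_nat m))"
  define G where "G = (\<lambda>j. - ((of_nat j :: rat) ^ 2 / (of_nat m + 1) ^ 2) * tt s q (Suc m) j)"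
  have m: "m + 1 \<le> N" using Suc by simp
  have st: "\<And>k. k \<in> {0..Suc m} \<Longrightarrow> tt s q (Suc m) k = \<rho> * tt s q m k + (G (Suc k) - G k)"
  proof -
    fix k assume "k \<in> {0..Suc m}"
    then have "k \<le> m + 1" by simp
    from wz_step[OF hs m this, of q] show "tt s q (Suc m) k = \<rho> * tt s q m k + (G (Suc k) - G k)"
      unfolding \<rho>_def G_def by (simp add: algebra_simps)
  qed
  have "(\<Sum>k=0..Suc m. tt s q (Suc m) k) = (\<Sum>k=0..Suc m. \<rho> * tt s q m k + (G (Suc k) - G k))"
    using st by (rule sum.cong[OF refl])
  also have "\<dots> = \<rho> * (\<Sum>k=0..Suc m. tt s q m k) + (\<Sum>k=0..Suc m. G (Suc k) - G k)"
    by (simp only: sum.distrib sum_distrib_left)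
  also have "(\<Sum>k=0..Suc m. G (Suc k) - G k) = G (Suc (Suc m)) - G 0"
    by (rule sum_Suc_diff) simp
  also have "G (Suc (Suc m)) = 0" unfolding G_def by (simp add: tt_zero)
  also have "G 0 = 0" unfolding G_def by simp
  also have "(\<Sum>k=0..Suc m. tt s q m k) = (\<Sum>k=0..m. tt s q m k)"
    by (simp add: tt_zero)
  also have "\<dots> = rr s q m" using Suc by simp
  finally show ?case unfolding rr_Suc \<rho>_def by simp
qed




lemma poch_P2_inst:
  fixes n :: nat
  defines "e \<equiv> of_nat n + 1/3 :: rat"
  shows "pochhammer (- of_nat n) k * P2 (of_nat n + 1) (1/9 + e/3 + e^2) k = (\<Prod>j<k. (1/3 + of_nat j) ^ 3 - e ^ 3)"
proof (induction k)
  case 0 then show ?case by (simp add: P2_def)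
next
  case (Suc k)
  have f: "(- of_nat n + of_nat k) * (of_nat k ^ 2 + (of_nat n + 1) * of_nat k + (1/9 + e/3 + e^2)) = (1/3 + of_nat k) ^ 3 - e ^ 3"
    unfolding e_def by (simp add: field_simps power2_eq_square power3_eq_cube)
  have "pochhammer (- of_nat n) (Suc k) * P2 (of_nat n + 1) (1/9 + e/3 + e^2) (Suc k) =
     (pochhammer (- of_nat n) k * P2 (of_nat n + 1) (1/9 + e/3 + e^2) k) *
     ((- of_nat n + of_nat k) * (of_nat k ^ 2 + (of_nat n + 1) * of_nat k + (1/9 + e/3 + e^2)))"
    by (simp add: pochhammer_Suc P2_def mult_ac)
  also have "\<dots> = (\<Prod>j<Suc k. (1/3 + of_nat j) ^ 3 - e ^ 3)" unfolding Suc f by simp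
  finally show ?case .
qed

lemma saal_inst:
  fixes n :: nat
  defines "e \<equiv> of_nat n + 1/3 :: rat"
  shows "(\<Sum>k=0..n. (\<Prod>j<k. (1/3 + of_nat j) ^ 3 - e ^ 3) / fact k ^ 3) =
    (-1) ^ n * (\<Prod>j<n. (2/3 + of_nat j) ^ 2 - e * (2/3 + of_nat j) + e ^ 2) / fact n ^ 2"
proof -
  define s where "s = (of_nat n + 1 :: rat)"
  define q where "q = 1/9 + e/3 + e^2"
  have hs: "\<forall>i\<le>n. s \<noteq> of_nat i" unfolding s_def by auto
  have tk: "tt s q n k = (\<Prod>j<k. (1/3 + of_nat j) ^ 3 - e ^ 3) / fact k ^ 3" for k
  proof -
    have "s - of_nat n = 1" unfolding s_def by simp
    then have "tt s q n k = pochhammer (- of_nat n) k * P2 s q k / (fact k ^ 2 * fact k)"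
      unfolding tt_def by (simp add: pochhammer_fact)
    also have "pochhammer (- of_nat n) k * P2 s q k = (\<Prod>j<k. (1/3 + of_nat j) ^ 3 - e ^ 3)"
      unfolding s_def q_def e_def by (rule poch_P2_inst[of n k, unfolded e_def])
    also have "(\<Prod>j<k. (1/3 + of_nat j) ^ 3 - e ^ 3) / (fact k ^ 2 * fact k) = (\<Prod>j<k. (1/3 + of_nat j) ^ 3 - e ^ 3) / fact k ^ 3"
      by (simp add: power3_eq_cube power2_eq_square mult_ac)
    finally show ?thesis .
  qed
  have pr: "(\<Prod>j<n. (1 + of_nat j) ^ 2 - s * (1 + of_nat j) + q) = (\<Prod>j<n. (2/3 + of_nat j) ^ 2 - e * (2/3 + of_nat j) + e ^ 2)"
    by (rule prod.cong[OF refl]) (simp add: s_def q_def e_def field_simps power2_eq_square)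
  have pm: "pochhammer (1 - s) n = (-1) ^ n * fact n"
    unfolding s_def using pochhammer_minus[of "of_nat n :: rat" n] by (simp add: pochhammer_fact)
  have "(\<Sum>k=0..n. (\<Prod>j<k. (1/3 + of_nat j) ^ 3 - e ^ 3) / fact k ^ 3) = (\<Sum>k=0..n. tt s q n k)"
    using tk by simp
  also have "\<dots> = rr s q n" using saal[OF hs] by simp
  also have "\<dots> = (-1) ^ n * (\<Prod>j<n. (2/3 + of_nat j) ^ 2 - e * (2/3 + of_nat j) + e ^ 2) / fact n ^ 2"
    unfolding rr_def pr pm by (simp add: power2_eq_square field_simps)
  finally show ?thesis .
qed




context fixes p :: nat assumes pp: "prime p"
begin

lemma prod_pert:
  assumes "finite A" "\<And>j. j \<in> A \<Longrightarrow> pint p (a j)" "\<And>j. j \<in> A \<Longrightarrow> pint p (b j)" "pint p d"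
  shows "\<exists>Z. pint p Z \<and> (\<Prod>j\<in>A. a j + d * b j) = (\<Prod>j\<in>A. a j) + d * Z"
  using assms
proof (induction A rule: finite_induct)
  case empty
  then show ?case using pint_0[OF pp] by (intro exI[of _ 0]) simp
next
  case (insert x F)
  then obtain Z where Z: "pint p Z" "(\<Prod>j\<in>F. a j + d * b j) = (\<Prod>j\<in>F. a j) + d * Z" by auto
  define Z' where "Z' = (\<Prod>j\<in>F. a j) * b x + Z * a x + d * Z * b x"
  have "pint p Z'" unfolding Z'_def using insert.prems Z(1)
    by (intro pint_add[OF pp] pint_mult[OF pp] pint_prod[OF pp]) auto
  moreover have "(\<Prod>j\<in>insert x F. a j + d * b j) = (\<Prod>j\<in>insert x F. a j) + d * Z'"
    using insert.hyps Z(2) unfolding Z'_def by (simp add: algebra_simps)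
  ultimately show ?case by blast
qed

lemma prod_1pert:
  assumes "finite A" "\<And>j. j \<in> A \<Longrightarrow> pint p (c j)" "pint p d"
  shows "\<exists>W. pint p W \<and> (\<Prod>j\<in>A. 1 + d * c j) = 1 + d * (\<Sum>j\<in>A. c j) + d ^ 2 * W"
  using assms
proof (induction A rule: finite_induct)
  case empty
  then show ?case using pint_0[OF pp] by (intro exI[of _ 0]) simp
next
  case (insert x F)
  then obtain W where W: "pint p W" "(\<Prod>j\<in>F. 1 + d * c j) = 1 + d * (\<Sum>j\<in>F. c j) + d ^ 2 * W" by auto
  define W' where "W' = W + (\<Sum>j\<in>F. c j) * c x + d * W * c x"
  have "pint p W'" unfolding W'_def using insert.prems W(1)
    by (intro pint_add[OF pp] pint_mult[OF pp] pint_sum[OF pp]) auto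
  moreover have "(\<Prod>j\<in>insert x F. 1 + d * c j) = 1 + d * (\<Sum>j\<in>insert x F. c j) + d ^ 2 * W'"
    using insert.hyps W(2) unfolding W'_def by (simp add: algebra_simps power2_eq_square)
  ultimately show ?case by blast
qed

lemma prod_refl_sq:
  fixes y :: "nat \<Rightarrow> rat"
  shows "(\<Prod>j<n. y j * y (n - 1 - j)) = (\<Prod>j<n. y j) ^ 2"
proof -
  have "(\<Prod>j<n. y (n - 1 - j)) = (\<Prod>j<n. y j)"
    using prod.nat_diff_reindex[of "y" n] by simp
  then show ?thesis by (simp add: prod.distrib power2_eq_square)
qed

lemma core1:
  fixes y :: "nat \<Rightarrow> rat" and e c0 :: rat
  assumes sym: "\<And>j. j < n \<Longrightarrow> y j + y (n - 1 - j) = e"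
    and nz: "\<And>j. j < n \<Longrightarrow> y j \<noteq> 0"
    and py: "\<And>j. j < n \<Longrightarrow> pint p (y j)"
    and piy: "\<And>j. j < n \<Longrightarrow> pint p (1 / y j)"
    and ec: "e = of_nat p * c0" and pc0: "pint p c0"
  shows "pc p 3 (\<Prod>j<n. y j * y (n - 1 - j) - e ^ 2) ((\<Prod>j<n. y j) ^ 2 * (1 + e ^ 2 * (\<Sum>j<n. 1 / (y j) ^ 2)))"
proof -
  define c where "c j = 1 / (y j * y (n - 1 - j))" for j
  have nz': "\<And>j. j < n \<Longrightarrow> y (n - 1 - j) \<noteq> 0" using nz by simp
  have pc: "\<And>j. j \<in> {..<n} \<Longrightarrow> pint p (c j)"
  proof -
    fix j assume "j \<in> {..<n}"
    then have "j < n" "n - 1 - j < n" by auto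
    then have "pint p (1 / y j * (1 / y (n - 1 - j)))" using piy by (intro pint_mult[OF pp]) auto
    then show "pint p (c j)" unfolding c_def by simp
  qed
  have pe: "pint p (- (e ^ 2))" unfolding ec using pc0
    by (intro pint_uminus[OF pp] pint_power[OF pp] pint_mult[OF pp] pint_nat[OF pp])
  obtain W where W: "pint p W" "(\<Prod>j<n. 1 + (- (e ^ 2)) * c j) = 1 + (- (e ^ 2)) * (\<Sum>j<n. c j) + (- (e ^ 2)) ^ 2 * W"
    using prod_1pert[of "{..<n}" c "- (e ^ 2)"] pc pe by auto
  define V where "V = (\<Sum>j<n. 1 / (y j ^ 2 * y (n - 1 - j)))"
  have pV: "pint p V" unfolding V_def
  proof (intro pint_sum[OF pp])
    fix j assume "j \<in> {..<n}"
    then have "j < n" "n - 1 - j < n" by auto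
    then have "pint p ((1 / y j) ^ 2 * (1 / y (n - 1 - j)))" using piy
      by (intro pint_mult[OF pp] pint_power[OF pp]) auto
    then show "pint p (1 / (y j ^ 2 * y (n - 1 - j)))" by (simp add: power_one_over)
  qed
  have csum: "(\<Sum>j<n. c j) = - (\<Sum>j<n. 1 / (y j) ^ 2) + e * V"
  proof -
    have "\<And>j. j \<in> {..<n} \<Longrightarrow> c j = - (1 / (y j) ^ 2) + e * (1 / (y j ^ 2 * y (n - 1 - j)))"
    proof -
      fix j assume "j \<in> {..<n}"
      then have j: "j < n" by auto
      have "e * (1 / (y j ^ 2 * y (n - 1 - j))) = (y j + y (n - 1 - j)) / (y j ^ 2 * y (n - 1 - j))"
        using sym[OF j] by simp
      then show "c j = - (1 / (y j) ^ 2) + e * (1 / (y j ^ 2 * y (n - 1 - j)))"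
        unfolding c_def using nz[OF j] nz'[OF j] by (simp add: field_simps power2_eq_square)
    qed
    then have "(\<Sum>j<n. c j) = (\<Sum>j<n. - (1 / (y j) ^ 2) + e * (1 / (y j ^ 2 * y (n - 1 - j))))"
      by (rule sum.cong[OF refl])
    then show ?thesis unfolding V_def by (simp only: sum.distrib sum_distrib_left sum_negf)
  qed
  have fac: "\<And>j. j \<in> {..<n} \<Longrightarrow> y j * y (n - 1 - j) - e ^ 2 = (y j * y (n - 1 - j)) * (1 + (- (e ^ 2)) * c j)"
  proof -
    fix j assume "j \<in> {..<n}"
    then have j: "j < n" by auto
    show "y j * y (n - 1 - j) - e ^ 2 = (y j * y (n - 1 - j)) * (1 + (- (e ^ 2)) * c j)"
      unfolding c_def using nz[OF j] nz'[OF j] by (simp add: field_simps)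
  qed
  have "(\<Prod>j<n. y j * y (n - 1 - j) - e ^ 2) = (\<Prod>j<n. y j * y (n - 1 - j)) * (\<Prod>j<n. 1 + (- (e ^ 2)) * c j)"
    using fac by (simp add: prod.distrib[symmetric])
  also have "\<dots> = (\<Prod>j<n. y j) ^ 2 * (1 + (- (e ^ 2)) * (\<Sum>j<n. c j) + (- (e ^ 2)) ^ 2 * W)"
    unfolding prod_refl_sq W(2) ..
  finally have L: "(\<Prod>j<n. y j * y (n - 1 - j) - e ^ 2) = (\<Prod>j<n. y j) ^ 2 * (1 + e ^ 2 * (\<Sum>j<n. 1 / (y j) ^ 2)) +
      of_nat p ^ 3 * ((\<Prod>j<n. y j) ^ 2 * (- (c0 ^ 3 * V) + of_nat p * c0 ^ 4 * W))"
    unfolding csum ec by (simp add: algebra_simps power2_eq_square power3_eq_cube power4_eq_xxxx)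
  have pY: "pint p ((\<Prod>j<n. y j) ^ 2 * (- (c0 ^ 3 * V) + of_nat p * c0 ^ 4 * W))"
    using py pc0 pV W(1)
    by (intro pint_mult[OF pp] pint_power[OF pp] pint_prod[OF pp] pint_add[OF pp] pint_uminus[OF pp] pint_nat[OF pp]) auto
  show ?thesis
    by (rule pc_eqI[OF pp pY]) (unfold L, simp)
qed

lemma core2:
  fixes y :: "nat \<Rightarrow> rat" and e c0 :: rat and j0 n :: nat
  assumes sym: "\<And>j. j < n \<Longrightarrow> y j + y (n - 1 - j) = e"
    and j0: "2 * j0 + 1 = n" and yj0: "y j0 = e / 2" and e0: "e \<noteq> 0"
    and py: "\<And>j. j < n \<Longrightarrow> pint p (y j)"
    and piy: "\<And>j. j < n \<Longrightarrow> j \<noteq> j0 \<Longrightarrow> pint p (1 / y j)"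
    and ec: "e = of_nat p * c0" and pc0: "pint p c0" and p4: "\<not> p dvd 4"
  shows "pc p 3 (\<Prod>j<n. y j * y (n - 1 - j) - e ^ 2) ((\<Prod>j<n. y j) ^ 2 * (1 - e ^ 2 * (\<Sum>j<n. 1 / (y j) ^ 2)))"
proof -
  define R where "R = {..<n} - {j0}"
  have j0n: "j0 \<in> {..<n}" using j0 by auto
  have fR: "finite R" unfolding R_def by simp
  have sj0: "n - 1 - j0 = j0" using j0 by simp
  have y0: "y j0 \<noteq> 0" using yj0 e0 by simp
  define PR where "PR = (\<Prod>j\<in>R. y j)"
  define SR where "SR = (\<Sum>j\<in>R. 1 / (y j) ^ 2)"
  have Py: "(\<Prod>j<n. y j) = y j0 * PR" unfolding PR_def R_def using prod.remove[OF _ j0n, of y] by simp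
  have Sy: "(\<Sum>j<n. 1 / (y j) ^ 2) = 1 / (y j0) ^ 2 + SR" unfolding SR_def R_def
    using sum.remove[OF _ j0n, of "\<lambda>j. 1 / (y j) ^ 2"] by simp
  have PyR: "(\<Prod>j\<in>R. y j * y (n - 1 - j)) = PR ^ 2"
  proof -
    have "(\<Prod>j<n. y j * y (n - 1 - j)) = y j0 * y j0 * (\<Prod>j\<in>R. y j * y (n - 1 - j))"
      unfolding R_def using prod.remove[OF _ j0n, of "\<lambda>j. y j * y (n - 1 - j)"] sj0 by simp
    moreover have "(\<Prod>j<n. y j * y (n - 1 - j)) = y j0 * y j0 * PR ^ 2"
      unfolding prod_refl_sq Py by (simp add: power2_eq_square)
    ultimately show ?thesis using y0 by simp
  qed
  have pe2: "pint p (e ^ 2)" unfolding ec using pc0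
    by (intro pint_power[OF pp] pint_mult[OF pp] pint_nat[OF pp])
  obtain Z where Z: "pint p Z" "(\<Prod>j\<in>R. y j * y (n - 1 - j) + e ^ 2 * (- 1)) = (\<Prod>j\<in>R. y j * y (n - 1 - j)) + e ^ 2 * Z"
  proof -
    have "\<exists>Z. pint p Z \<and> (\<Prod>j\<in>R. y j * y (n - 1 - j) + e ^ 2 * (- 1)) = (\<Prod>j\<in>R. y j * y (n - 1 - j)) + e ^ 2 * Z"
    proof (rule prod_pert[OF fR _ _ pe2])
      fix j assume "j \<in> R"
      then have "j < n" "n - 1 - j < n" unfolding R_def by auto
      then show "pint p (y j * y (n - 1 - j))" using py by (intro pint_mult[OF pp]) auto
    next
      fix j assume "j \<in> R"
      show "pint p (- 1)" using pint_int[OF pp, of "-1"] by simp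
    qed
    then show ?thesis using that by blast
  qed
  have LHS: "(\<Prod>j<n. y j * y (n - 1 - j) - e ^ 2) = (y j0 * y j0 - e ^ 2) * (PR ^ 2 + e ^ 2 * Z)"
  proof -
    have "(\<Prod>j<n. y j * y (n - 1 - j) - e ^ 2) = (y j0 * y j0 - e ^ 2) * (\<Prod>j\<in>R. y j * y (n - 1 - j) - e ^ 2)"
      unfolding R_def using prod.remove[OF _ j0n, of "\<lambda>j. y j * y (n - 1 - j) - e ^ 2"] sj0 by simp
    also have "(\<Prod>j\<in>R. y j * y (n - 1 - j) - e ^ 2) = (\<Prod>j\<in>R. y j * y (n - 1 - j) + e ^ 2 * (- 1))"
      by simp
    also have "\<dots> = PR ^ 2 + e ^ 2 * Z" unfolding Z(2) PyR ..
    finally show ?thesis .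
  qed
  have pSR: "pint p SR" unfolding SR_def
  proof (intro pint_sum[OF pp])
    fix j assume "j \<in> R"
    then have "j < n" "j \<noteq> j0" unfolding R_def by auto
    then have "pint p ((1 / y j) ^ 2)" using piy by (intro pint_power[OF pp]) auto
    then show "pint p (1 / (y j) ^ 2)" by (simp add: power_one_over)
  qed
  have pPR: "pint p PR" unfolding PR_def R_def using py by (intro pint_prod[OF pp]) auto
  have p14: "pint p (1 / 4)" using pint_inv_nat[OF pp p4] by simp
  define z where "z = of_nat p * c0 ^ 4 * ((- 3) * (1 / 4) * Z + PR ^ 2 * SR * (1 / 4))"
  have pz: "pint p z" unfolding z_def using pc0 Z(1) pSR pPR p14
    by (intro pint_mult[OF pp] pint_add[OF pp] pint_power[OF pp] pint_nat[OF pp] pint_int[OF pp, of "-3", simplified]) auto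
  have eq: "(\<Prod>j<n. y j * y (n - 1 - j) - e ^ 2) - (\<Prod>j<n. y j) ^ 2 * (1 - e ^ 2 * (\<Sum>j<n. 1 / (y j) ^ 2)) = of_nat p ^ 3 * z"
  proof -
    have "(\<Prod>j<n. y j) ^ 2 * (1 - e ^ 2 * (\<Sum>j<n. 1 / (y j) ^ 2)) = PR ^ 2 * (y j0 ^ 2 - e ^ 2 - e ^ 2 * y j0 ^ 2 * SR)"
      unfolding Py Sy using y0 by (simp add: field_simps power2_eq_square)
    then have "(\<Prod>j<n. y j * y (n - 1 - j) - e ^ 2) - (\<Prod>j<n. y j) ^ 2 * (1 - e ^ 2 * (\<Sum>j<n. 1 / (y j) ^ 2))
       = (y j0 * y j0 - e ^ 2) * (PR ^ 2 + e ^ 2 * Z) - PR ^ 2 * (y j0 ^ 2 - e ^ 2 - e ^ 2 * y j0 ^ 2 * SR)"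
      unfolding LHS by simp
    also have "\<dots> = (- 3) * (1 / 4) * e ^ 4 * Z + e ^ 4 * (1 / 4) * PR ^ 2 * SR"
      unfolding yj0 by (simp add: algebra_simps power2_eq_square power4_eq_xxxx)
    also have "\<dots> = of_nat p ^ 3 * z" unfolding z_def ec
      by (simp add: algebra_simps power2_eq_square power3_eq_cube power4_eq_xxxx)
    finally show ?thesis .
  qed
  show ?thesis by (rule pc_eqI[OF pp pz eq])
qed

end



lemma not_dvd_small: "prime p \<Longrightarrow> 0 < m \<Longrightarrow> m < p \<Longrightarrow> \<not> p dvd (m::nat)"
  by (auto dest: dvd_imp_le)

theorem corollary1p3:
  fixes p t :: nat
  assumes "prime p" and "odd p" and "t \<in> {1, 2}" and "p mod 3 = t"
  shows "rat_cong_padic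
    (\<Sum>k = 0..(t * p - 1) div 3. pochhammer (1/3 :: rat) k ^ 3 / (fact k) ^ 3)
    (pochhammer (2/3 :: rat) ((t * p - 1) div 3) ^ 2 / pochhammer (1 :: rat) ((t * p - 1) div 3) ^ 2 *
      (1 + (-1) ^ (t - 1) * (of_nat (t * p)) ^ 2 *
        (\<Sum>i = 1..(t * p - 1) div 3. 1 / (3 * of_nat i - 1) ^ 2)))
    p 3"
proof -
  note pp = assms(1)
  define n where "n = (t * p - 1) div 3"
  have t12: "t = 1 \<or> t = 2" using assms(3) by auto
  define q where "q = p div 3"
  have pq: "p = 3 * q + t" using div_mult_mod_eq[of p 3] assms(4) unfolding q_def by linarith
  have tp: "3 * n + 1 = t * p"
    using t12
  proof
    assume t1: "t = 1"
    then have "t * p - 1 = 3 * q" using pq by simp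
    then have "n = q" unfolding n_def by simp
    then show ?thesis using pq t1 by simp
  next
    assume t2: "t = 2"
    then have "t * p - 1 = 3 * (2 * q + 1)" using pq by simp
    then have "n = 2 * q + 1" unfolding n_def by simp
    then show ?thesis using pq t2 by simp
  qed
  have p3: "\<not> p dvd 3"
  proof
    assume "p dvd 3"
    moreover have "prime (3::nat)" by simp
    ultimately have "p = 3" using pp primes_dvd_imp_eq by blast
    then show False using assms(4) t12 by auto
  qed
  have np: "n < p" using tp t12 prime_gt_1_nat[OF pp] by auto
  define e where "e = (of_nat n + 1/3 :: rat)"
  define c0 where "c0 = (of_nat t / 3 :: rat)"
  have ec: "e = of_nat p * c0"
  proof -
    have "(of_nat (3 * n + 1) :: rat) = of_nat (t * p)" using tp by simp
    then have "3 * of_nat n + 1 = (of_nat t * of_nat p :: rat)" by simp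
    then show ?thesis unfolding e_def c0_def by (simp add: field_simps)
  qed
  have p13: "pint p (1/3)" using pint_inv_nat[OF pp p3] by simp
  have pc0: "pint p c0" unfolding c0_def using p13 pint_mult[OF pp pint_nat[OF pp, of t] p13] by simp
  define y where "y j = 2/3 + (of_nat j :: rat)" for j
  define S2 where "S2 = (\<Sum>k=0..n. (\<Prod>j<k. (1/3 + of_nat j) ^ 3 - e ^ 3) / fact k ^ 3)"
  have stepA: "pc p 3 (\<Sum>k = 0..n. pochhammer (1/3 :: rat) k ^ 3 / (fact k) ^ 3) S2"
    unfolding S2_def
  proof (rule pc_sum[OF pp])
    fix k assume "k \<in> {0..n}"
    then have kp: "k < p" using np by simp
    have ph: "pochhammer (1/3 :: rat) k ^ 3 = (\<Prod>j<k. (1/3 + of_nat j) ^ 3)"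
      by (simp add: pochhammer_prod atLeast0LessThan prod_power_distrib)
    obtain Z where Z: "pint p Z" "(\<Prod>j\<in>{..<k}. (1/3 + of_nat j) ^ 3 + of_nat p ^ 3 * (- (c0 ^ 3))) =
        (\<Prod>j\<in>{..<k}. (1/3 + of_nat j) ^ 3) + of_nat p ^ 3 * Z"
    proof -
      have "\<exists>Z. pint p Z \<and> (\<Prod>j\<in>{..<k}. (1/3 + of_nat j) ^ 3 + of_nat p ^ 3 * (- (c0 ^ 3))) =
        (\<Prod>j\<in>{..<k}. (1/3 + (of_nat j :: rat)) ^ 3) + of_nat p ^ 3 * Z"
        by (rule prod_pert[OF pp]) (use p13 pc0 in \<open>auto intro!: pint_power[OF pp] pint_add[OF pp] pint_nat[OF pp] pint_uminus[OF pp]\<close>)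
      then show ?thesis using that by blast
    qed
    have e3: "\<And>j. (1/3 + of_nat j) ^ 3 - e ^ 3 = (1/3 + of_nat j) ^ 3 + of_nat p ^ 3 * (- (c0 ^ 3))"
      unfolding ec by (simp add: power_mult_distrib)
    have fk: "pint p (1 / fact k)" using pint_inv_fact[OF pp kp] .
    have pz: "pint p (- Z * (1 / fact k) ^ 3)"
      using Z(1) fk by (intro pint_mult[OF pp] pint_uminus[OF pp] pint_power[OF pp])
    show "pc p 3 (pochhammer (1/3) k ^ 3 / fact k ^ 3) ((\<Prod>j<k. (1/3 + of_nat j) ^ 3 - e ^ 3) / fact k ^ 3)"
    proof (rule pc_eqI[OF pp pz])
      show "pochhammer (1/3) k ^ 3 / fact k ^ 3 - (\<Prod>j<k. (1/3 + of_nat j) ^ 3 - e ^ 3) / fact k ^ 3 =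
          of_nat p ^ 3 * (- Z * (1 / fact k) ^ 3)"
        unfolding ph e3 Z(2) by (simp add: field_simps)
    qed
  qed
  have stepB: "S2 = (-1) ^ n * (\<Prod>j<n. (2/3 + of_nat j) ^ 2 - e * (2/3 + of_nat j) + e ^ 2) / fact n ^ 2"
    unfolding S2_def e_def by (rule saal_inst)
  have sym: "\<And>j. j < n \<Longrightarrow> y j + y (n - 1 - j) = e"
    unfolding y_def e_def by (simp add: of_nat_diff)
  have stepC: "(-1) ^ n * (\<Prod>j<n. (2/3 + of_nat j) ^ 2 - e * (2/3 + of_nat j) + e ^ 2) = (\<Prod>j<n. y j * y (n - 1 - j) - e ^ 2)"
  proof -
    have "(\<Prod>j<n. (2/3 + of_nat j) ^ 2 - e * (2/3 + of_nat j) + e ^ 2) = (\<Prod>j<n. - (y j * y (n - 1 - j) - e ^ 2))"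
    proof (rule prod.cong[OF refl])
      fix j assume "j \<in> {..<n}"
      then have h: "y (n - 1 - j) = e - y j" using sym by (simp add: algebra_simps)
      have "(2/3 + of_nat j) ^ 2 - e * (2/3 + of_nat j) + e ^ 2 = - (y j * (e - y j) - e ^ 2)"
        unfolding y_def by (simp add: algebra_simps power2_eq_square)
      then show "(2/3 + of_nat j) ^ 2 - e * (2/3 + of_nat j) + e ^ 2 = - (y j * y (n - 1 - j) - e ^ 2)"
        unfolding h .
    qed
    also have "\<dots> = (-1) ^ n * (\<Prod>j<n. y j * y (n - 1 - j) - e ^ 2)" by (subst prod_uminus) simp
    finally show ?thesis by (simp add: power_mult_distrib[symmetric])
  qed
  define sg where "sg = ((-1) ^ (t - 1) :: rat)"
  have stepD: "pochhammer (2/3 :: rat) n ^ 2 / pochhammer (1 :: rat) n ^ 2 *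
      (1 + (-1) ^ (t - 1) * (of_nat (t * p)) ^ 2 * (\<Sum>i = 1..n. 1 / (3 * of_nat i - 1) ^ 2))
     = (1 / fact n) ^ 2 * ((\<Prod>j<n. y j) ^ 2 * (1 + sg * e ^ 2 * (\<Sum>j<n. 1 / (y j) ^ 2)))"
  proof -
    have a: "pochhammer (2/3 :: rat) n = (\<Prod>j<n. y j)"
      unfolding y_def by (simp add: pochhammer_prod atLeast0LessThan)
    have b: "(of_nat (t * p) :: rat) = 3 * e"
    proof -
      have "(of_nat (3 * n + 1) :: rat) = of_nat (t * p)" using tp by simp
      then show ?thesis unfolding e_def by (simp add: algebra_simps)
    qed
    have c: "(\<Sum>i = 1..n. 1 / (3 * of_nat i - 1) ^ 2) = (\<Sum>j<n. 1 / (9 * (y j) ^ 2) :: rat)"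
      unfolding One_nat_def sum.atLeast1_atMost_eq
      by (rule sum.cong[OF refl]) (simp add: y_def algebra_simps power2_eq_square)
    have d: "(\<Sum>j<n. 1 / (9 * (y j) ^ 2) :: rat) = (1/9) * (\<Sum>j<n. 1 / (y j) ^ 2)"
      by (simp add: sum_distrib_left)
    show ?thesis unfolding a b c d sg_def pochhammer_fact[symmetric]
      by (simp add: power2_eq_square field_simps)
  qed
  have ynz: "\<And>j. y j \<noteq> 0"
  proof -
    fix j have "y j > 0" unfolding y_def by (simp add: add_pos_nonneg)
    then show "y j \<noteq> 0" by simp
  qed
  have py: "\<And>j. pint p (y j)"
  proof -
    fix j
    have "pint p (2 * (1/3))" by (rule pint_mult[OF pp pint_numeral[OF pp] p13])
    then have "pint p (2/3)" by simp
    then show "pint p (y j)" unfolding y_def by (rule pint_add[OF pp _ pint_nat[OF pp]])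
  qed
  have piy: "\<And>j. \<not> p dvd (3 * j + 2) \<Longrightarrow> pint p (1 / y j)"
  proof -
    fix j assume h: "\<not> p dvd (3 * j + 2)"
    have "1 / y j = 3 * (1 / of_nat (3 * j + 2))" unfolding y_def by (simp add: field_simps)
    moreover have "pint p (3 * (1 / of_nat (3 * j + 2)))"
      by (rule pint_mult[OF pp pint_numeral[OF pp] pint_inv_nat[OF pp h]])
    ultimately show "pint p (1 / y j)" by simp
  qed
  have stepE: "pc p 3 (\<Prod>j<n. y j * y (n - 1 - j) - e ^ 2) ((\<Prod>j<n. y j) ^ 2 * (1 + sg * e ^ 2 * (\<Sum>j<n. 1 / (y j) ^ 2)))"
    using t12
  proof
    assume t1: "t = 1"
    have "sg = 1" unfolding sg_def t1 by simp
    moreover have "pc p 3 (\<Prod>j<n. y j * y (n - 1 - j) - e ^ 2) ((\<Prod>j<n. y j) ^ 2 * (1 + e ^ 2 * (\<Sum>j<n. 1 / (y j) ^ 2)))"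
    proof -
      have piy1: "\<And>j. j < n \<Longrightarrow> pint p (1 / y j)"
      proof -
        fix j assume "j < n"
        moreover have "3 * n + 1 = p" using tp t1 by simp
        ultimately have "0 < 3 * j + 2" "3 * j + 2 < p" by linarith+
        then have "\<not> p dvd (3 * j + 2)" by (intro not_dvd_small[OF pp])
        then show "pint p (1 / y j)" by (rule piy)
      qed
      have ynz': "\<And>j. j < n \<Longrightarrow> y j \<noteq> 0" using ynz by blast
      have py': "\<And>j. j < n \<Longrightarrow> pint p (y j)" using py by blast
      show ?thesis by (rule core1[where y=y and n=n and e=e, OF pp sym ynz' py' piy1 ec pc0])
    qed
    ultimately show ?thesis by simp
  next
    assume t2: "t = 2"
    have "sg = -1" unfolding sg_def t2 by simp
    define j0 where "j0 = n div 2"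
    have tp2: "3 * n + 1 = 2 * p" using tp t2 by simp
    have nodd: "odd n" using tp2 by presburger
    have j0: "2 * j0 + 1 = n" unfolding j0_def using nodd by presburger
    have p2: "3 * j0 + 2 = p" using j0 tp2 by linarith
    have yj0: "y j0 = e / 2"
    proof -
      have "(of_nat (2 * j0 + 1) :: rat) = of_nat n" using j0 by simp
      then show ?thesis unfolding y_def e_def by (simp add: field_simps)
    qed
    have "e > 0" unfolding e_def by (simp add: add_nonneg_pos)
    then have e0: "e \<noteq> 0" by simp
    have p4: "\<not> p dvd 4"
    proof
      assume "p dvd 4"
      then have "p \<le> 4" by (simp add: dvd_imp_le)
      moreover have "p \<noteq> 2" "p \<noteq> 4" using assms(2) by auto
      moreover have "p \<noteq> 3" using p3 by auto
      moreover have "p \<noteq> 0" "p \<noteq> 1" using pp by auto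
      ultimately show False by linarith
    qed
    have "pc p 3 (\<Prod>j<n. y j * y (n - 1 - j) - e ^ 2) ((\<Prod>j<n. y j) ^ 2 * (1 - e ^ 2 * (\<Sum>j<n. 1 / (y j) ^ 2)))"
    proof -
      have piy2: "\<And>j. j < n \<Longrightarrow> j \<noteq> j0 \<Longrightarrow> pint p (1 / y j)"
      proof -
        fix j assume jn: "j < n" and jj: "j \<noteq> j0"
        have lt: "0 < 3 * j + 2" "3 * j + 2 < 2 * p" using jn tp2 by linarith+
        have ne: "3 * j + 2 \<noteq> p" using jj p2 by auto
        have "\<not> p dvd (3 * j + 2)"
        proof
          assume "p dvd (3 * j + 2)"
          then obtain c where c: "3 * j + 2 = p * c" by auto
          then have "c \<noteq> 0" using lt by auto
          moreover have "c < 2"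
          proof (rule ccontr)
            assume "\<not> c < 2"
            then have "p * c \<ge> p * 2" by simp
            then show False using c lt by simp
          qed
          ultimately have "c = 1" by auto
          then show False using c ne by simp
        qed
        then show "pint p (1 / y j)" by (rule piy)
      qed
      have py': "\<And>j. j < n \<Longrightarrow> pint p (y j)" using py by blast
      show ?thesis by (rule core2[where y=y and n=n and e=e, OF pp sym j0 yj0 e0 py' piy2 ec pc0 p4])
    qed
    then show ?thesis using \<open>sg = -1\<close> by simp
  qed
  have stepE': "pc p 3 ((1 / fact n) ^ 2 * (\<Prod>j<n. y j * y (n - 1 - j) - e ^ 2))
      ((1 / fact n) ^ 2 * ((\<Prod>j<n. y j) ^ 2 * (1 + sg * e ^ 2 * (\<Sum>j<n. 1 / (y j) ^ 2))))"
    by (rule pc_mult[OF pp _ stepE]) (intro pint_power[OF pp] pint_inv_fact[OF pp np])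
  have S2eq: "S2 = (1 / fact n) ^ 2 * (\<Prod>j<n. y j * y (n - 1 - j) - e ^ 2)"
    unfolding stepB stepC[symmetric] by (simp add: power2_eq_square field_simps)
  have "pc p 3 (\<Sum>k = 0..n. pochhammer (1/3 :: rat) k ^ 3 / (fact k) ^ 3)
     (pochhammer (2/3 :: rat) n ^ 2 / pochhammer (1 :: rat) n ^ 2 *
      (1 + (-1) ^ (t - 1) * (of_nat (t * p)) ^ 2 * (\<Sum>i = 1..n. 1 / (3 * of_nat i - 1) ^ 2)))"
  proof -
    have Y: "pc p 3 S2 ((1 / fact n) ^ 2 * ((\<Prod>j<n. y j) ^ 2 * (1 + sg * e ^ 2 * (\<Sum>j<n. 1 / (y j) ^ 2))))"
      unfolding S2eq by (rule stepE')
    show ?thesis unfolding stepD by (rule pc_trans[OF pp stepA Y])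
  qed
  then show ?thesis unfolding n_def by (rule pc_rat_cong[OF pp])
qed



end
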